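(* Let $v\ge 2$, $l\ge 1$ and $t\ge 1$ be integers, put $n=vl$, and assume $n>2t-2$. Let $B$ be the set of sequences $\sigma\in\mathbb{Z}_v^n$ (indexed $0,\dots,n-1$) in which every symbol occurs exactly $l$ times, and choose $\sigma\in B$ uniformly at random. For $z\in\mathbb{Z}_v^t$ let $\lambda(z)=\#\{i\in\{0,\dots,n-1\}:\ \sigma((i+\iota)\,\%\,n)=z(\iota)\ \forall\,0\le\iota<t\}$. If $(z(i),\dots,z(t-1))\neq(z(0),\dots,z(t-1-i))$ for all $1\le i<t$, then $$\mathrm{VAR}(\lambda(z))=\frac{\prod_{a=0}^{v-1}(l)_{|z|_a}}{(n-1)_{t-1}}-\left(\frac{\prod_{a=0}^{v-1}(l)_{|z|_a}}{(n-1)_{t-1}}\right)^2+\frac{\prod_{a=0}^{v-1}(l)_{2|z|_a}}{(n-1)_{2t-2}}.$$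
   Context: $x\,\%\,n$ is the least nonnegative remainder modulo $n$. $(x)_m=x(x-1)\cdots(x-m+1)$ is the falling factorial. For $a\in\mathbb{Z}_v$, $|z|_a$ is the number of entries of $z$ equal to $a$. *)

theory Defs
  imports "HOL-Probability.Probability"
begin

definition falling :: "nat \<Rightarrow> nat \<Rightarrow> real" where
  "falling x m = (\<Prod>i<m. (real x - real i))"

definition balanced_seqs :: "nat \<Rightarrow> nat \<Rightarrow> nat list set" where
  "balanced_seqs v l = {\<sigma>. length \<sigma> = v * l \<and> set \<sigma> \<subseteq> {..<v} \<and>
                          (\<forall>a<v. count_list \<sigma> a = l)}"

definition occ :: "nat list \<Rightarrow> nat list \<Rightarrow> nat" where
  "occ \<sigma> z = card {i. i < length \<sigma> \<and>
      (\<forall>\<iota><length z. \<sigma> ! ((i + \<iota>) mod length \<sigma>) = z ! \<iota>)}"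

end

theory Submission imports Defs "HOL-Combinatorics.Multiset_Permutations" "HOL-Combinatorics.Permutations" "HOL-Number_Theory.Cong"
begin

lemma falling_Suc: "falling x (Suc m) = falling x m * (real x - real m)"
  by (simp add: falling_def)

lemma falling_fact: "m \<le> x \<Longrightarrow> falling x m * fact (x - m) = fact x"
proof (induction m)
  case 0 then show ?case by (simp add: falling_def)
next
  case (Suc m)
  have "fact (x - m) = (real x - real m) * (fact (x - Suc m) :: real)"
    using Suc.prems by (metis Suc_diff_Suc Suc_le_lessD fact_Suc of_nat_diff of_nat_fact Suc_le_eq less_imp_le_nat)
  then show ?case using Suc by (simp add: falling_Suc)
qed

lemma falling_zero: "x < m \<Longrightarrow> falling x m = 0"
  unfolding falling_def by (intro prod_zero) (auto intro!: bexI[of _ x])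

lemma falling_shift: "1 \<le> n \<Longrightarrow> falling n (Suc m) = real n * falling (n - 1) m"
proof (induction m)
  case 0 then show ?case by (simp add: falling_def)
next
  case (Suc m)
  have "falling n (Suc (Suc m)) = falling n (Suc m) * (real n - real (Suc m))" by (rule falling_Suc)
  moreover have "falling (n-1) (Suc m) = falling (n-1) m * (real (n-1) - real m)" by (rule falling_Suc)
  moreover have "falling n (Suc m) = real n * falling (n - 1) m" using Suc by simp
  moreover have "real (n-1) = real n - 1" using Suc.prems by (simp add: of_nat_diff)
  ultimately show ?case by (simp only:) (simp add: algebra_simps)
qed

definition MM :: "nat \<Rightarrow> nat \<Rightarrow> nat multiset" where
  "MM v l = (\<Sum>a\<in>{..<v}. replicate_mset l a)"

lemma count_MM: "count (MM v l) a = (if a < v then l else 0)"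
  unfolding MM_def by (simp add: count_sum)

lemma size_MM: "size (MM v l) = v * l"
  unfolding MM_def by (induction v) (simp_all add: lessThan_Suc)

lemma B_eq: "balanced_seqs v l = permutations_of_multiset (MM v l)"
proof (intro set_eqI iffI)
  fix s assume s: "s \<in> balanced_seqs v l"
  have "mset s = MM v l"
  proof (rule multiset_eqI)
    fix a show "count (mset s) a = count (MM v l) a"
      using s by (auto simp: balanced_seqs_def count_MM count_mset count_list_0_iff)
  qed
  then show "s \<in> permutations_of_multiset (MM v l)" by (rule permutations_of_multisetI)
next
  fix s assume "s \<in> permutations_of_multiset (MM v l)"
  then have m: "mset s = MM v l" by (rule permutations_of_multisetD)
  have "length s = v * l" using m size_MM by (metis size_mset)
  moreover have "set s \<subseteq> {..<v}"
  proof
    fix x assume "x \<in> set s"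
    then have "count (mset s) x > 0" by simp
    then show "x \<in> {..<v}" using m by (auto simp: count_MM split: if_splits)
  qed
  moreover have "\<forall>a<v. count_list s a = l"
    using m by (metis count_MM count_mset)
  ultimately show "s \<in> balanced_seqs v l" by (simp add: balanced_seqs_def)
qed

lemma card_perm_gen:
  fixes M :: "nat multiset"
  assumes "set_mset M \<subseteq> {..<v}"
  shows "card (permutations_of_multiset M) * (\<Prod>a<v. fact (count M a)) = fact (size M)"
proof -
  have "(\<Prod>a<v. fact (count M a)) = (\<Prod>a\<in>set_mset M. fact (count M a))"
    by (rule prod.mono_neutral_right) (use assms in \<open>auto simp: not_in_iff\<close>)
  then show ?thesis using card_permutations_of_multiset_aux by metis
qed

lemma count_take_le: "count_list (take k s) a \<le> count_list s a"
proof -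
  have "count_list s a = count_list (take k s) a + count_list (drop k s) a"
    by (metis append_take_drop_id count_list_append)
  then show ?thesis by simp
qed

lemma prefix_count:
  fixes ws :: "nat list"
  assumes ws: "set ws \<subseteq> {..<v}" and k: "length ws = k"
  shows "real (card {s\<in>balanced_seqs v l. take k s = ws}) * falling (v * l) k =
         real (card (balanced_seqs v l)) * (\<Prod>a<v. falling l (count_list ws a))"
proof (cases "\<exists>a<v. count_list ws a > l")
  case True
  then obtain a where a: "a < v" "count_list ws a > l" by auto
  have "{s\<in>balanced_seqs v l. take k s = ws} = {}"
  proof (intro equals0I)
    fix s assume "s \<in> {s\<in>balanced_seqs v l. take k s = ws}"
    then have "count_list s a = l" "take k s = ws" using a by (auto simp: balanced_seqs_def)
    then show False using count_take_le[of k s a] a by simp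
  qed
  moreover have "(\<Prod>a<v. falling l (count_list ws a)) = 0"
    using a by (intro prod_zero) (auto intro!: bexI[of _ a] falling_zero)
  ultimately show ?thesis by (metis card.empty mult_zero_left mult_zero_right of_nat_0)
next
  case False
  then have le: "\<forall>a<v. count_list ws a \<le> l" by auto
  define M' where "M' = MM v l - mset ws"
  have sub: "mset ws \<subseteq># MM v l"
  proof (rule mset_subset_eqI)
    fix a show "count (mset ws) a \<le> count (MM v l) a"
      using le ws by (cases "a < v") (auto simp: count_MM count_mset count_list_0_iff)
  qed
  have cM': "count M' a = (if a < v then l - count_list ws a else 0)" for a
    by (simp add: M'_def count_MM count_mset)
  have sM': "size M' = v * l - k"
    using sub k by (simp add: M'_def size_Diff_submset size_MM)
  have kle: "k \<le> v * l" using size_mset_mono[OF sub] k by (simp add: size_MM)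
  have eq: "{s\<in>balanced_seqs v l. take k s = ws} = (\<lambda>r. ws @ r) ` permutations_of_multiset M'"
  proof (intro set_eqI iffI)
    fix s assume "s \<in> {s\<in>balanced_seqs v l. take k s = ws}"
    then have s: "mset s = MM v l" "take k s = ws"
      by (auto simp: B_eq dest: permutations_of_multisetD)
    have "s = ws @ drop k s" using s(2) by (metis append_take_drop_id)
    moreover have "mset (drop k s) = M'"
      using s M'_def by (metis \<open>s = ws @ drop k s\<close> add_diff_cancel_left' mset_append)
    ultimately show "s \<in> (\<lambda>r. ws @ r) ` permutations_of_multiset M'"
      by (auto intro: permutations_of_multisetI)
  next
    fix s assume "s \<in> (\<lambda>r. ws @ r) ` permutations_of_multiset M'"
    then obtain r where r: "s = ws @ r" "mset r = M'" by (auto dest: permutations_of_multisetD)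
    have "mset s = MM v l" using r sub by (simp add: M'_def)
    then show "s \<in> {s\<in>balanced_seqs v l. take k s = ws}"
      using r k by (auto simp: B_eq intro: permutations_of_multisetI)
  qed
  have cP: "card {s\<in>balanced_seqs v l. take k s = ws} = card (permutations_of_multiset M')"
    unfolding eq by (rule card_image) (auto intro: inj_onI)
  have setM': "set_mset M' \<subseteq> {..<v}"
  proof
    fix x assume "x \<in># M'" then have "count M' x > 0" by simp
    then show "x \<in> {..<v}" by (simp add: cM' split: if_splits)
  qed
  have e1: "card (permutations_of_multiset M') * (\<Prod>a<v. fact (l - count_list ws a)) = fact (v * l - k)"
    using card_perm_gen[OF setM'] by (simp add: cM' sM')
  have setM: "set_mset (MM v l) \<subseteq> {..<v}"
  proof
    fix x assume "x \<in># MM v l" then have "count (MM v l) x > 0" by simp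
    then show "x \<in> {..<v}" by (simp add: count_MM split: if_splits)
  qed
  have e2: "card (balanced_seqs v l) * (\<Prod>a<v. fact l) = fact (v * l)"
    using card_perm_gen[OF setM] by (simp add: count_MM size_MM B_eq)
  define Q where "Q = (\<Prod>a<v. (fact (l - count_list ws a) :: real))"
  have Qpos: "Q \<noteq> 0" unfolding Q_def by (simp add: prod_zero_iff)
  have r1: "real (card (permutations_of_multiset M')) * Q = fact (v * l - k)"
    unfolding Q_def using arg_cong[OF e1, of real] by simp
  have r2: "real (card (balanced_seqs v l)) * (\<Prod>a<v. fact l) = fact (v * l)"
    using arg_cong[OF e2, of real] by simp
  have "real (card {s\<in>balanced_seqs v l. take k s = ws}) * falling (v * l) k * Q = fact (v * l)"
  proof -
    have "real (card {s\<in>balanced_seqs v l. take k s = ws}) * falling (v * l) k * Q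
       = (real (card (permutations_of_multiset M')) * Q) * falling (v * l) k"
      using cP by (simp add: algebra_simps)
    also have "\<dots> = fact (v * l)" using r1 falling_fact[OF kle] by (simp add: algebra_simps)
    finally show ?thesis .
  qed
  moreover have "real (card (balanced_seqs v l)) * (\<Prod>a<v. falling l (count_list ws a)) * Q = fact (v * l)"
  proof -
    have "(\<Prod>a<v. falling l (count_list ws a)) * Q = (\<Prod>a<v. fact l)"
      unfolding Q_def prod.distrib[symmetric] using le by (intro prod.cong refl falling_fact) auto
    then show ?thesis using r2 by (metis mult.assoc mult.commute)
  qed
  ultimately show ?thesis using Qpos by (metis mult_right_cancel)
qed

lemma permute_list_inj:
  assumes p: "p permutes {..<n}" and "length x = n" "length y = n"
    and eq: "permute_list p x = permute_list p y"
  shows "x = y"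
proof -
  have ip: "inv p permutes {..<n}" using p by (rule permutes_inv)
  have "permute_list (p \<circ> inv p) x = permute_list (inv p) (permute_list p x)"
    using ip assms by (intro permute_list_compose) simp
  moreover have "permute_list (p \<circ> inv p) y = permute_list (inv p) (permute_list p y)"
    using ip assms by (intro permute_list_compose) simp
  ultimately show ?thesis using eq permutes_inv_o(1)[OF p] by simp
qed

lemma finite_B: "finite (balanced_seqs v l)"
  by (simp add: B_eq)

lemma pos_count:
  assumes d: "distinct ps" and sp: "set ps \<subseteq> {..<v * l}" and k: "length ps = k" "length ws = k"
  shows "card {s\<in>balanced_seqs v l. \<forall>j<k. s ! (ps ! j) = ws ! j} = card {s\<in>balanced_seqs v l. take k s = ws}"
proof -
  define n where "n = v * l"
  define qs where "qs = ps @ sorted_list_of_set ({..<n} - set ps)"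
  have dq: "distinct qs" using d by (simp add: qs_def)
  have sq: "set qs = {..<n}" using sp by (auto simp: qs_def n_def)
  have lq: "length qs = n" using distinct_card[OF dq] sq by simp
  have kn: "k \<le> n" using distinct_card[OF d] k sp card_mono[of "{..<n}" "set ps"] by (simp add: n_def)
  define p where "p = (\<lambda>j. if j < n then qs ! j else j)"
  have bq: "bij_betw ((!) qs) {..<n} {..<n}" using bij_betw_nth[OF dq] lq sq by simp
  have "bij_betw p {..<n} {..<n}"
    using bq by (rule bij_betw_cong[THEN iffD1, rotated]) (simp add: p_def)
  then have pp: "p permutes {..<n}" by (rule bij_imp_permutes) (simp add: p_def)
  have ip: "inv p permutes {..<n}" using pp by (rule permutes_inv)
  have pj: "p j = ps ! j" if "j < k" for j using that kn k by (simp add: p_def qs_def nth_append)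
  define A where "A = {s\<in>balanced_seqs v l. \<forall>j<k. s ! (ps ! j) = ws ! j}"
  define C where "C = {s\<in>balanced_seqs v l. take k s = ws}"
  have lenB: "length s = n" if "s \<in> balanced_seqs v l" for s
    using that by (simp add: balanced_seqs_def n_def)
  have memB: "permute_list f s \<in> balanced_seqs v l" if "s \<in> balanced_seqs v l" "f permutes {..<n}" for s f
    using that lenB[OF that(1)] by (auto simp: B_eq intro!: permutations_of_multisetI dest!: permutations_of_multisetD)
  have "card A \<le> card C"
  proof (rule card_inj_on_le[of "permute_list p"])
    show "inj_on (permute_list p) A"
      by (rule inj_onI) (use pp lenB in \<open>auto simp: A_def intro: permute_list_inj\<close>)
    show "permute_list p ` A \<subseteq> C"
    proof
      fix s' assume "s' \<in> permute_list p ` A"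
      then obtain s where s: "s \<in> A" "s' = permute_list p s" by auto
      have sB: "s \<in> balanced_seqs v l" using s by (simp add: A_def)
      have "take k s' = ws"
      proof (rule nth_equalityI)
        show "length (take k s') = length ws" using s lenB[OF sB] kn k by simp
        fix j assume "j < length (take k s')"
        then have j: "j < k" "j < n" using s lenB[OF sB] kn by auto
        have "take k s' ! j = s ! p j" using j s pp lenB[OF sB] by (simp add: permute_list_nth)
        also have "\<dots> = ws ! j" using pj[OF j(1)] s j by (simp add: A_def)
        finally show "take k s' ! j = ws ! j" .
      qed
      then show "s' \<in> C" using memB[OF sB pp] s by (simp add: C_def)
    qed
    show "finite C" using finite_B by (simp add: C_def)
  qed
  moreover have "card C \<le> card A"
  proof (rule card_inj_on_le[of "permute_list (inv p)"])
    show "inj_on (permute_list (inv p)) C"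
      by (rule inj_onI) (use ip lenB in \<open>auto simp: C_def intro: permute_list_inj\<close>)
    show "permute_list (inv p) ` C \<subseteq> A"
    proof
      fix s' assume "s' \<in> permute_list (inv p) ` C"
      then obtain s where s: "s \<in> C" "s' = permute_list (inv p) s" by auto
      have sB: "s \<in> balanced_seqs v l" using s by (simp add: C_def)
      have "s' ! (ps ! j) = ws ! j" if j: "j < k" for j
      proof -
        have pjn: "ps ! j < n" using sp j k nth_mem[of j ps] unfolding n_def by blast
        have "s' ! (ps ! j) = s ! (inv p (ps ! j))" using s ip lenB[OF sB] pjn by (simp add: permute_list_nth)
        also have "inv p (ps ! j) = j" using pj[OF j] permutes_inverses(2)[OF pp, of j] by simp
        also have "s ! j = take k s ! j" using j by simp
        finally show ?thesis using s by (simp add: C_def)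
      qed
      then show "s' \<in> A" using memB[OF sB ip] s by (simp add: A_def)
    qed
    show "finite A" using finite_B by (simp add: A_def)
  qed
  ultimately show ?thesis by (simp add: A_def C_def)
qed

lemma pos_prob:
  fixes ws :: "nat list"
  assumes d: "distinct ps" and sp: "set ps \<subseteq> {..<v * l}" and k: "length ps = k" "length ws = k"
    and ws: "set ws \<subseteq> {..<v}"
  shows "real (card {s\<in>balanced_seqs v l. \<forall>j<k. s ! (ps ! j) = ws ! j}) * falling (v * l) k =
         real (card (balanced_seqs v l)) * (\<Prod>a<v. falling l (count_list ws a))"
  using pos_count[OF assms(1-4)] prefix_count[OF ws k(2)] by simp

definition mt :: "nat \<Rightarrow> nat list \<Rightarrow> nat list \<Rightarrow> nat \<Rightarrow> bool" where
  "mt n z s i = (\<forall>j<length z. s ! ((i + j) mod n) = z ! j)"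

lemma mt_mod: "mt n z s (i mod n) = mt n z s i"
  by (simp add: mt_def mod_add_left_eq)

lemma mt_overlap:
  assumes "0 < e" "e < length z"
    and nb: "\<forall>i. 1 \<le> i \<and> i < length z \<longrightarrow> drop i z \<noteq> take (length z - i) z"
  shows "\<not> (mt n z s j \<and> mt n z s (j + e))"
proof
  assume h: "mt n z s j \<and> mt n z s (j + e)"
  have "drop e z = take (length z - e) z"
  proof (rule nth_equalityI)
    show "length (drop e z) = length (take (length z - e) z)" by simp
    fix x assume x: "x < length (drop e z)"
    have "drop e z ! x = z ! (e + x)" using x by simp
    also have "\<dots> = s ! ((j + (e + x)) mod n)" using h x by (simp add: mt_def)
    also have "\<dots> = s ! ((j + e + x) mod n)" by (simp add: add.assoc)
    also have "\<dots> = z ! x" using h x by (simp add: mt_def)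
    also have "\<dots> = take (length z - e) z ! x" using x by simp
    finally show "drop e z ! x = take (length z - e) z ! x" .
  qed
  then show False using nb assms(1,2) by auto
qed

lemma mod_inj_small:
  fixes a b n :: nat
  assumes "(i + a) mod n = (i + b) mod n" "a < n" "b < n"
  shows "a = b"
proof -
  have "[i + a = i + b] (mod n)" using assms(1) by (simp add: cong_def)
  then have "[a = b] (mod n)" by (simp add: cong_add_lcancel_nat)
  then show ?thesis using assms by (simp add: cong_def)
qed

lemma one_win:
  assumes z: "length z = t" "set z \<subseteq> {..<v}" and tn: "t \<le> v * l" "0 < v * l"
  shows "real (card {s\<in>balanced_seqs v l. mt (v * l) z s i}) * falling (v * l) t =
         real (card (balanced_seqs v l)) * (\<Prod>a<v. falling l (count_list z a))"
proof -
  define n where "n = v * l"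
  define ps where "ps = map (\<lambda>j. (i + j) mod n) [0..<t]"
  have "{s\<in>balanced_seqs v l. mt (v * l) z s i} = {s\<in>balanced_seqs v l. \<forall>j<t. s ! (ps ! j) = z ! j}"
    by (simp add: mt_def ps_def n_def z)
  moreover have "distinct ps" unfolding ps_def distinct_map
    using tn by (auto simp: n_def intro!: inj_onI dest: mod_inj_small)
  moreover have "set ps \<subseteq> {..<v * l}" using tn by (auto simp: ps_def n_def)
  ultimately show ?thesis using pos_prob[of ps v l t z] z by (simp add: ps_def)
qed

lemma two_win:
  assumes z: "length z = t" "set z \<subseteq> {..<v}" and td: "t \<le> d" "d + t \<le> v * l" and t0: "0 < t"
  shows "real (card {s\<in>balanced_seqs v l. mt (v * l) z s i \<and> mt (v * l) z s (i + d)}) * falling (v * l) (2 * t) =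
         real (card (balanced_seqs v l)) * (\<Prod>a<v. falling l (2 * count_list z a))"
proof -
  define n where "n = v * l"
  have n0: "0 < n" unfolding n_def using td t0 by linarith
  define ps where "ps = map (\<lambda>j. (i + j) mod n) [0..<t] @ map (\<lambda>j. (i + d + j) mod n) [0..<t]"
  have "{s\<in>balanced_seqs v l. mt (v * l) z s i \<and> mt (v * l) z s (i + d)} =
        {s\<in>balanced_seqs v l. \<forall>j<2 * t. s ! (ps ! j) = (z @ z) ! j}"
  proof (intro Collect_cong conj_cong refl iffI)
    fix s assume h: "mt (v * l) z s i \<and> mt (v * l) z s (i + d)"
    show "\<forall>j<2 * t. s ! (ps ! j) = (z @ z) ! j"
    proof (intro allI impI)
      fix j assume j: "j < 2 * t"
      show "s ! (ps ! j) = (z @ z) ! j"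
      proof (cases "j < t")
        case True then show ?thesis using h z by (simp add: ps_def nth_append mt_def n_def)
      next
        case False
        then obtain m where m: "j = t + m" "m < t" using j by (metis add_diff_inverse_nat add_less_imp_less_left mult_2)
        then show ?thesis using h z by (simp add: ps_def nth_append mt_def n_def add.assoc)
      qed
    qed
  next
    fix s assume h: "\<forall>j<2 * t. s ! (ps ! j) = (z @ z) ! j"
    have "mt (v * l) z s i"
      unfolding mt_def
    proof (intro allI impI)
      fix j assume j: "j < length z"
      then show "s ! ((i + j) mod (v * l)) = z ! j" using h[rule_format, of j] z by (simp add: ps_def nth_append n_def)
    qed
    moreover have "mt (v * l) z s (i + d)"
      unfolding mt_def
    proof (intro allI impI)
      fix j assume j: "j < length z"
      then show "s ! ((i + d + j) mod (v * l)) = z ! j" using h[rule_format, of "t + j"] z by (simp add: ps_def nth_append n_def)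
    qed
    ultimately show "mt (v * l) z s i \<and> mt (v * l) z s (i + d)" by simp
  qed
  moreover have "distinct ps"
  proof -
    have "t \<le> n" using td by (simp add: n_def)
    then have d1: "distinct (map (\<lambda>j. (i + j) mod n) [0..<t])" "distinct (map (\<lambda>j. (i + d + j) mod n) [0..<t])"
      unfolding distinct_map by (auto intro!: inj_onI dest: mod_inj_small)
    have "(i + a) mod n \<noteq> (i + (d + b)) mod n" if "a < t" "b < t" for a b
    proof
      assume "(i + a) mod n = (i + (d + b)) mod n"
      then have "a = d + b" using that td by (intro mod_inj_small[of i a n "d + b"]) (auto simp: n_def)
      then show False using that td by simp
    qed
    then have "set (map (\<lambda>j. (i + j) mod n) [0..<t]) \<inter> set (map (\<lambda>j. (i + d + j) mod n) [0..<t]) = {}"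
      by (auto simp: add.assoc)
    then show ?thesis using d1 by (simp add: ps_def)
  qed
  moreover have "set ps \<subseteq> {..<v * l}" using n0 by (auto simp: ps_def n_def)
  moreover have "length ps = 2 * t" by (simp add: ps_def)
  moreover have "set (z @ z) \<subseteq> {..<v}" using z by simp
  ultimately show ?thesis using pos_prob[of ps v l "2 * t" "z @ z"] z by (simp add: mult_2)
qed

lemma card_sum: "finite A \<Longrightarrow> real (card {x\<in>A. P x}) = (\<Sum>x\<in>A. if P x then 1 else 0)"
  by (simp add: sum.If_cases Int_def conj_commute)

lemma falling_nz: "m \<le> x \<Longrightarrow> falling x m \<noteq> 0"
  using falling_fact[of m x] by auto

lemma rot_bij: "0 < (n::nat) \<Longrightarrow> bij_betw (\<lambda>d. (i + d) mod n) {..<n} {..<n}"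
proof -
  assume n: "0 < n"
  have inj: "inj_on (\<lambda>d. (i + d) mod n) {..<n}"
  proof (rule inj_onI)
    fix x y assume "x \<in> {..<n}" "y \<in> {..<n}" "(i + x) mod n = (i + y) mod n"
    then show "x = y" using mod_inj_small[of i x n y] by simp
  qed
  moreover have "(\<lambda>d. (i + d) mod n) ` {..<n} = {..<n}"
    using n by (intro endo_inj_surj inj) auto
  ultimately show ?thesis by (simp add: bij_betw_def)
qed

theorem corollary4:
  fixes v l t :: nat and z :: "nat list"
  assumes "v \<ge> 2" and "l \<ge> 1" and "t \<ge> 1"
    and "v * l > 2 * t - 2"
    and "length z = t" and "set z \<subseteq> {..<v}"
    and "\<forall>i. 1 \<le> i \<and> i < t \<longrightarrow> drop i z \<noteq> take (t - i) z"
  shows "measure_pmf.variance (pmf_of_set (balanced_seqs v l)) (\<lambda>\<sigma>. real (occ \<sigma> z)) =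
     (\<Prod>a<v. falling l (count_list z a)) / falling (v * l - 1) (t - 1)
     - ((\<Prod>a<v. falling l (count_list z a)) / falling (v * l - 1) (t - 1))\<^sup>2
     + (\<Prod>a<v. falling l (2 * count_list z a)) / falling (v * l - 1) (2 * t - 2)"
proof -
  note zt = assms(5) and zv = assms(6) and nb = assms(7)
  define n where "n = v * l"
  define B where "B = balanced_seqs v l"
  define Bc where "Bc = real (card B)"
  define P1 where "P1 = (\<Prod>a<v. falling l (count_list z a))"
  define P2 where "P2 = (\<Prod>a<v. falling l (2 * count_list z a))"
  define F1 where "F1 = falling (n - 1) (t - 1)"
  define F2 where "F2 = falling (n - 1) (2 * t - 2)"
  define X where "X = (\<lambda>s. real (occ s z))"
  have n1: "2 * t \<le> n + 1" using assms(3,4) by (simp add: n_def)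
  have tn: "t \<le> n" using n1 assms(3) by simp
  have n0: "0 < n" using tn assms(3) by simp
  have finB: "finite B" by (simp add: B_def finite_B)
  have neB: "B \<noteq> {}" by (simp add: B_def B_eq)
  have Bc0: "Bc > 0" using finB neB by (simp add: Bc_def card_gt_0_iff)
  have lenB: "length s = n" if "s \<in> B" for s using that by (simp add: B_def balanced_seqs_def n_def)
  have F1nz: "F1 \<noteq> 0" unfolding F1_def using tn by (intro falling_nz) simp
  have F2nz: "F2 \<noteq> 0" unfolding F2_def using n1 by (intro falling_nz) simp
  have fall1: "falling n t = real n * F1"
    using falling_shift[of n "t - 1"] n0 assms(3) by (simp add: F1_def)
  define p1 where "p1 = Bc * P1 / falling n t"
  have c1: "real (card {s\<in>B. mt n z s i}) = p1" for i
  proof -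
    have "real (card {s\<in>B. mt n z s i}) * falling n t = Bc * P1"
      using one_win[OF zt zv, of l i] tn n0 by (simp add: B_def Bc_def P1_def n_def)
    then show ?thesis unfolding p1_def using fall1 F1nz n0 by (simp add: field_simps)
  qed
  define p2 where "p2 = Bc * P2 / falling n (2 * t)"
  have c2: "real (card {s\<in>B. mt n z s i \<and> mt n z s (i + d)}) = p2" if "t \<le> d" "d + t \<le> n" for i d
  proof -
    have "real (card {s\<in>B. mt n z s i \<and> mt n z s (i + d)}) * falling n (2 * t) = Bc * P2"
      using two_win[OF zt zv that(1), of l i] that assms(3) by (simp add: B_def Bc_def P2_def n_def)
    moreover have "falling n (2 * t) \<noteq> 0" using that by (intro falling_nz) simp
    ultimately show ?thesis unfolding p2_def by (simp add: field_simps)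
  qed
  have c0: "card {s\<in>B. mt n z s i \<and> mt n z s (i + d)} = 0" if "0 < d" "d < n" "d < t \<or> n < d + t" for i d
  proof -
    have "\<not> (mt n z s i \<and> mt n z s (i + d))" for s
    proof (cases "d < t")
      case True then show ?thesis using mt_overlap[of d z n s i] that zt nb by simp
    next
      case False
      then have e: "0 < n - d" "n - d < t" using that by auto
      have "mt n z s (i + d + (n - d)) = mt n z s i"
        using that mt_mod[of n z s "i + n"] mt_mod[of n z s i] by simp
      then show ?thesis using mt_overlap[of "n - d" z n s "i + d"] e zt nb by auto
    qed
    then have "{s\<in>B. mt n z s i \<and> mt n z s (i + d)} = {}" by blast
    then show ?thesis by (metis card.empty)
  qed
  have Xeq: "X s = (\<Sum>i<n. if mt n z s i then 1 else 0)" if "s \<in> B" for s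
  proof -
    have "occ s z = card {i\<in>{..<n}. mt n z s i}"
      unfolding occ_def using lenB[OF that] by (auto simp: mt_def intro!: arg_cong[where f=card])
    then show ?thesis unfolding X_def using card_sum[of "{..<n}" "mt n z s"] by simp
  qed
  have S1: "(\<Sum>s\<in>B. X s) = real n * p1"
  proof -
    have "(\<Sum>s\<in>B. X s) = (\<Sum>s\<in>B. \<Sum>i<n. if mt n z s i then 1 else 0)" by (simp add: Xeq)
    also have "\<dots> = (\<Sum>i<n. \<Sum>s\<in>B. if mt n z s i then 1 else 0)" by (rule sum.swap)
    also have "\<dots> = (\<Sum>i<n. real (card {s\<in>B. mt n z s i}))" by (simp add: card_sum finB)
    also have "\<dots> = real n * p1" by (simp add: c1)
    finally show ?thesis .
  qed
  define c where "c = real (card {d. t \<le> d \<and> d + t \<le> n})"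
  have cval: "c = real (n + 1 - 2 * t)"
  proof -
    have "{d. t \<le> d \<and> d + t \<le> n} = {t..n - t}" using tn by auto
    then show ?thesis unfolding c_def by simp
  qed
  have inner: "(\<Sum>j<n. real (card {s\<in>B. mt n z s i \<and> mt n z s j})) = p1 + c * p2" for i
  proof -
    have "(\<Sum>j<n. real (card {s\<in>B. mt n z s i \<and> mt n z s j}))
        = (\<Sum>d<n. real (card {s\<in>B. mt n z s i \<and> mt n z s ((i + d) mod n)}))"
      by (rule sum.reindex_bij_betw[OF rot_bij[OF n0], symmetric])
    also have "\<dots> = (\<Sum>d<n. real (card {s\<in>B. mt n z s i \<and> mt n z s (i + d)}))"
      by (simp add: mt_mod)
    also have "\<dots> = (\<Sum>d<n. (if d = 0 then p1 else 0) + (if t \<le> d \<and> d + t \<le> n then p2 else 0))"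
    proof (rule sum.cong[OF refl])
      fix d assume d: "d \<in> {..<n}"
      show "real (card {s\<in>B. mt n z s i \<and> mt n z s (i + d)}) =
            (if d = 0 then p1 else 0) + (if t \<le> d \<and> d + t \<le> n then p2 else 0)"
      proof (cases "d = 0")
        case True then show ?thesis using c1[of i] assms(3) by simp
      next
        case False
        show ?thesis
        proof (cases "t \<le> d \<and> d + t \<le> n")
          case True then show ?thesis using c2[of d i] False by simp
        next
          case F2: False
          then show ?thesis using c0[of d i] False d by auto
        qed
      qed
    qed
    also have "\<dots> = p1 + (\<Sum>d<n. if t \<le> d \<and> d + t \<le> n then p2 else 0)"
      using n0 by (simp add: sum.distrib)
    also have "(\<Sum>d<n. if t \<le> d \<and> d + t \<le> n then p2 else 0) = p2 * real (card ({..<n} \<inter> {d. t \<le> d \<and> d + t \<le> n}))"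
      by (simp add: sum.If_cases)
    also have "{..<n} \<inter> {d. t \<le> d \<and> d + t \<le> n} = {d. t \<le> d \<and> d + t \<le> n}" using assms(3) by auto
    finally show ?thesis by (simp add: c_def)
  qed
  have S2: "(\<Sum>s\<in>B. (X s)\<^sup>2) = real n * (p1 + c * p2)"
  proof -
    have "(\<Sum>s\<in>B. (X s)\<^sup>2) = (\<Sum>s\<in>B. \<Sum>i<n. \<Sum>j<n. if mt n z s i \<and> mt n z s j then 1 else 0)"
    proof (rule sum.cong[OF refl])
      fix s assume "s \<in> B"
      then have "(X s)\<^sup>2 = (\<Sum>i<n. if mt n z s i then 1 else 0) * (\<Sum>j<n. if mt n z s j then 1 else 0)"
        by (simp add: Xeq power2_eq_square)
      also have "\<dots> = (\<Sum>i<n. \<Sum>j<n. (if mt n z s i then 1 else 0) * (if mt n z s j then 1 else 0))"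
        by (rule sum_product)
      also have "\<dots> = (\<Sum>i<n. \<Sum>j<n. if mt n z s i \<and> mt n z s j then 1 else 0)"
        by (intro sum.cong refl) auto
      finally show "(X s)\<^sup>2 = (\<Sum>i<n. \<Sum>j<n. if mt n z s i \<and> mt n z s j then 1 else 0)" by simp
    qed
    also have "\<dots> = (\<Sum>i<n. \<Sum>s\<in>B. \<Sum>j<n. if mt n z s i \<and> mt n z s j then 1 else 0)" by (rule sum.swap)
    also have "\<dots> = (\<Sum>i<n. \<Sum>j<n. \<Sum>s\<in>B. if mt n z s i \<and> mt n z s j then 1 else 0)"
      by (simp add: sum.swap[of _ B])
    also have "\<dots> = (\<Sum>i<n. \<Sum>j<n. real (card {s\<in>B. mt n z s i \<and> mt n z s j}))"
      by (simp add: card_sum finB)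
    also have "\<dots> = real n * (p1 + c * p2)" by (simp add: inner)
    finally show ?thesis .
  qed
  define mu where "mu = (\<Sum>s\<in>B. X s) / Bc"
  have Emu: "measure_pmf.expectation (pmf_of_set B) X = mu"
    unfolding mu_def Bc_def by (rule integral_pmf_of_set[OF neB finB])
  have var: "measure_pmf.variance (pmf_of_set B) X = (\<Sum>s\<in>B. (X s)\<^sup>2) / Bc - mu\<^sup>2"
  proof -
    have "measure_pmf.variance (pmf_of_set B) X = (\<Sum>s\<in>B. (X s - mu)\<^sup>2) / Bc"
      unfolding Emu Bc_def by (rule integral_pmf_of_set[OF neB finB])
    also have "(\<Sum>s\<in>B. (X s - mu)\<^sup>2) = (\<Sum>s\<in>B. (X s)\<^sup>2) - 2 * mu * (\<Sum>s\<in>B. X s) + Bc * mu\<^sup>2"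
      by (simp add: power2_diff sum.distrib sum_subtractf sum_distrib_left sum_distrib_right Bc_def algebra_simps)
    also have "(\<Sum>s\<in>B. X s) = Bc * mu" using Bc0 by (simp add: mu_def)
    finally show ?thesis using Bc0 by (simp add: field_simps power2_eq_square)
  qed
  have mu_val: "mu = P1 / F1"
    unfolding mu_def S1 p1_def fall1 using Bc0 n0 F1nz by (simp add: field_simps)
  have key2: "real n * c * p2 / Bc = P2 / F2"
  proof (cases "2 * t \<le> n")
    case True
    have "falling n (2 * t) = falling n (2 * t - 1) * (real n - real (2 * t - 1))"
      using falling_Suc[of n "2 * t - 1"] assms(3) by simp
    also have "falling n (2 * t - 1) = real n * F2"
      using falling_shift[of n "2 * t - 2"] n0 assms(3) by (simp add: F2_def Suc_diff_Suc numeral_2_eq_2)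
    also have "real n - real (2 * t - 1) = c" using True assms(3) by (simp add: cval of_nat_diff)
    finally have f: "falling n (2 * t) = real n * F2 * c" .
    have "c \<noteq> 0" using True by (simp add: cval)
    then show ?thesis unfolding p2_def f using Bc0 n0 F2nz by (simp add: field_simps)
  next
    case False
    then have "c = 0" using n1 by (simp add: cval)
    moreover have "P2 = 0"
    proof -
      have "real (card {s\<in>B. take (2 * t) s = z @ z}) * falling n (2 * t) = Bc * P2"
        using prefix_count[of "z @ z" v "2 * t" l] zv zt by (simp add: B_def Bc_def P2_def n_def mult_2)
      moreover have "falling n (2 * t) = 0" using False by (intro falling_zero) simp
      ultimately show ?thesis using Bc0 by simp
    qed
    ultimately show ?thesis by simp
  qed
  have "measure_pmf.variance (pmf_of_set B) X = P1 / F1 - (P1 / F1)\<^sup>2 + P2 / F2"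
  proof -
    have "(\<Sum>s\<in>B. (X s)\<^sup>2) / Bc = real n * p1 / Bc + real n * c * p2 / Bc"
      unfolding S2 by (simp add: add_divide_distrib algebra_simps)
    also have "real n * p1 / Bc = mu" unfolding mu_def S1 ..
    finally show ?thesis unfolding var key2 mu_val by simp
  qed
  then show ?thesis unfolding B_def X_def P1_def P2_def F1_def F2_def n_def .
qed

end
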